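(* Let $E\subset\mathbb{R}^d$ be such that $\chi_E\in W^{\eta,p}(\mathbb{R}^d)$ with $0<\eta<1$, $1\le p<\infty$, and $\eta p<1$. Then there exists a constant $C=C(\eta,p,d)$ such that $$\|\widehat{\chi_E}\|_{L^{\frac{2d}{d+\eta p},\infty}(\mathbb{R}^d)}\le C\,\|\chi_E\|_{W^{\eta,p}}^{p/2}.$$
   Context: $\chi_E$ is the characteristic function of $E$. $W^{\eta,p}(\mathbb{R}^d)$ is the space defined by the Gagliardo–Slobodeckij seminorm $\|\chi_E\|_{W^{\eta,p}}^p=\int_{\mathbb{R}^d}\int_{\mathbb{R}^d}\frac{|\chi_E(x)-\chi_E(y)|^p}{|x-y|^{d+\eta p}}\,dx\,dy$. The Fourier transform is $\widehat{f}(\xi)=\int e^{-2\pi i x\cdot\xi}f(x)\,dx$. For $1\le r<\infty$, $\|g\|_{L^{r,\infty}}=\sup_{t>0}t\,|\{x:|g(x)|>t\}|^{1/r}$. *)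

theory Defs
  imports "HOL-Analysis.Analysis"
begin

definition fourier_transform :: "('a::euclidean_space \<Rightarrow> complex) \<Rightarrow> 'a \<Rightarrow> complex" where
  "fourier_transform f \<xi> = (LINT x|lebesgue. cis (- 2 * pi * (x \<bullet> \<xi>)) * f x)"

definition char_fun :: "'a set \<Rightarrow> 'a \<Rightarrow> complex" where
  "char_fun E x = (if x \<in> E then 1 else 0)"

definition ennreal_powr :: "ennreal \<Rightarrow> real \<Rightarrow> ennreal" where
  "ennreal_powr m a = (if m = \<infinity> then \<infinity> else ennreal (enn2real m powr a))"

definition weak_Lr_norm :: "real \<Rightarrow> ('a::euclidean_space \<Rightarrow> complex) \<Rightarrow> ennreal" where
  "weak_Lr_norm r g =
     (SUP t\<in>{0<..}. ennreal t * ennreal_powr (emeasure lebesgue {x. norm (g x) > t}) (1 / r))"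

definition gagliardo_p :: "real \<Rightarrow> real \<Rightarrow> 'a::euclidean_space set \<Rightarrow> ennreal" where
  "gagliardo_p \<eta> p E =
     (\<integral>\<^sup>+ x. (\<integral>\<^sup>+ y. ennreal (norm (char_fun E x - char_fun E y) powr p
          / norm (x - y) powr (real DIM('a) + \<eta> * p)) \<partial>lebesgue) \<partial>lebesgue)"

text \<open>chi_E belongs to W^{eta,p}(R^d): chi_E in L^p (E measurable of finite measure)
  and finite Gagliardo seminorm.\<close>
definition char_in_W :: "real \<Rightarrow> real \<Rightarrow> 'a::euclidean_space set \<Rightarrow> bool" where
  "char_in_W \<eta> p E \<longleftrightarrow> E \<in> sets lebesgue \<and> emeasure lebesgue E < \<infinity> \<and> gagliardo_p \<eta> p E < \<infinity>"

end

theory Submission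
  imports Defs "HOL-Probability.Probability"
begin

lemma gauss1:
  fixes e u :: real assumes e: "e > 0"
  shows "integrable lborel (\<lambda>t. exp (-pi*e*t^2))"
    and "(\<integral>t. complex_of_real (exp (-pi*e*t^2)) * cis (-2*pi*u*t) \<partial>lborel)
          = complex_of_real (exp (-pi*u^2/e) / sqrt e)"
proof -
  define a where "a = sqrt (2*pi*e)"
  have a: "a > 0" using e by (simp add: a_def)
  have a2: "a^2 = 2*pi*e" using e by (simp add: a_def)
  define th where "th = -2*pi*u/a"
  have int0: "integrable lborel std_normal_density"
    using integrable_std_normal_moment[of 0] by simp
  have "integrable lborel (\<lambda>t. std_normal_density (0 + a*t))"
    using lborel_integrable_real_affine[OF int0, of a 0] a by simp
  then have "integrable lborel (\<lambda>t. sqrt (2*pi) * std_normal_density (a*t))" by simp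
  moreover have "\<And>t. sqrt (2*pi) * std_normal_density (a*t) = exp (-pi*e*t^2)"
    using a2 by (simp add: std_normal_density_def power_mult_distrib)
  ultimately show I: "integrable lborel (\<lambda>t. exp (-pi*e*t^2))" by simp
  have "char std_normal_distribution th = complex_of_real (exp (- (th^2) / 2))"
    by (simp add: char_std_normal_distribution)
  also have "char std_normal_distribution th = (\<integral>x. complex_of_real (std_normal_density x) * iexp (th*x) \<partial>lborel)"
    unfolding char_def
    by (subst integral_density) (auto simp: scaleR_conv_of_real)
  also have "\<dots> = a *\<^sub>R (\<integral>t. complex_of_real (std_normal_density (0 + a*t)) * iexp (th*(0+a*t)) \<partial>lborel)"
    using lborel_integral_real_affine[of a "\<lambda>x. complex_of_real (std_normal_density x) * iexp (th*x)" 0] a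
    by simp
  also have "(\<lambda>t. complex_of_real (std_normal_density (0 + a*t)) * iexp (th*(0+a*t)))
     = (\<lambda>t. complex_of_real (1 / sqrt (2*pi)) * (complex_of_real (exp (-pi*e*t^2)) * cis (-2*pi*u*t)))"
  proof
    fix t
    have h1: "th*(0+a*t) = -2*pi*u*t" using a by (simp add: th_def)
    have h2: "std_normal_density (0+a*t) = 1/sqrt(2*pi) * exp(-pi*e*t^2)"
      using a2 by (simp add: std_normal_density_def power_mult_distrib)
    have h3: "iexp (th*(0+a*t)) = cis (-2*pi*u*t)" by (simp only: h1 cis_conv_exp)
    show "complex_of_real (std_normal_density (0 + a*t)) * iexp (th*(0+a*t))
      = complex_of_real (1 / sqrt (2*pi)) * (complex_of_real (exp (-pi*e*t^2)) * cis (-2*pi*u*t))"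
      by (subst h2, subst h3) (simp only: of_real_mult mult.assoc)
  qed
  finally have "complex_of_real (exp (- (th^2) / 2)) = a *\<^sub>R (complex_of_real (1 / sqrt (2*pi)) * (\<integral>t. complex_of_real (exp (-pi*e*t^2)) * cis (-2*pi*u*t) \<partial>lborel))"
    by simp
  then have "(\<integral>t. complex_of_real (exp (-pi*e*t^2)) * cis (-2*pi*u*t) \<partial>lborel)
     = complex_of_real (exp (- (th^2) / 2) * sqrt (2*pi) / a)"
    using a by (simp add: scaleR_conv_of_real field_simps)
  also have "exp (- (th^2) / 2) * sqrt (2*pi) / a = exp (-pi*u^2/e) / sqrt e"
  proof -
    have "th^2/2 = pi*u^2/e" using a2 e unfolding th_def by (simp add: power_divide field_simps power2_eq_square)
    moreover have "sqrt (2*pi) / a = 1 / sqrt e" using e unfolding a_def by (simp add: real_sqrt_mult)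
    moreover have "exp (- (th^2) / 2) * sqrt (2*pi) / a = exp (-(th^2/2)) * (sqrt (2*pi) / a)" by simp
    ultimately show ?thesis by (simp only:) simp
  qed
  finally show "(\<integral>t. complex_of_real (exp (-pi*e*t^2)) * cis (-2*pi*u*t) \<partial>lborel)
          = complex_of_real (exp (-pi*u^2/e) / sqrt e)" .
qed

lemma lborel_prod_integrable_integral:
  fixes f :: "'a::euclidean_space \<Rightarrow> real \<Rightarrow> 'b::{real_normed_field,banach,second_countable_topology}"
  assumes int: "\<And>b. b \<in> Basis \<Longrightarrow> integrable lborel (f b)"
  shows "integrable (lborel::'a measure) (\<lambda>x. (\<Prod>b\<in>Basis. f b (x \<bullet> b)))"
    and "(\<integral>x. (\<Prod>b\<in>Basis. f b (x \<bullet> b)) \<partial>(lborel::'a measure)) = (\<Prod>b\<in>Basis. integral\<^sup>L lborel (f b))"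
proof -
  interpret P: product_sigma_finite "\<lambda>_::'a. lborel::real measure" ..
  let ?T = "\<lambda>g::'a\<Rightarrow>real. \<Sum>b\<in>Basis. g b *\<^sub>R b"
  have T: "?T \<in> measurable (\<Pi>\<^sub>M b\<in>Basis. lborel) (borel::'a measure)"
    by measurable
  have meas: "(\<lambda>x. (\<Prod>b\<in>Basis. f b (x \<bullet> b))) \<in> borel_measurable (borel::'a measure)"
    using int by (intro borel_measurable_prod) (auto intro: borel_measurable_integrable)
  have eq: "\<And>g. (\<Prod>b\<in>Basis. f b (?T g \<bullet> b)) = (\<Prod>b\<in>Basis. f b (g b))"
    by (intro prod.cong refl) (simp add: inner_sum_left inner_Basis if_distrib[of "\<lambda>x. _ * x"] sum.delta cong: if_cong)
  have "integrable (\<Pi>\<^sub>M b\<in>Basis. lborel) (\<lambda>g. \<Prod>b\<in>Basis. f b (g b))"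
    using int by (intro P.product_integrable_prod) auto
  then show "integrable (lborel::'a measure) (\<lambda>x. (\<Prod>b\<in>Basis. f b (x \<bullet> b)))"
    by (subst lborel_eq) (simp add: integrable_distr_eq[OF T meas] eq)
  have "(\<integral>x. (\<Prod>b\<in>Basis. f b (x \<bullet> b)) \<partial>(lborel::'a measure))
      = (\<integral>g. (\<Prod>b\<in>Basis. f b (g b)) \<partial>(\<Pi>\<^sub>M b\<in>Basis. lborel))"
    by (subst lborel_eq) (simp add: integral_distr[OF T meas] eq)
  also have "\<dots> = (\<Prod>b\<in>Basis. integral\<^sup>L lborel (f b))"
    using int by (intro P.product_integral_prod) auto
  finally show "(\<integral>x. (\<Prod>b\<in>Basis. f b (x \<bullet> b)) \<partial>(lborel::'a measure)) = (\<Prod>b\<in>Basis. integral\<^sup>L lborel (f b))" .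
qed

lemma borel_measurable_cis[measurable]: "cis \<in> borel_measurable borel"
  by (intro borel_measurable_continuous_onI continuous_intros)

lemma cis_sum:
  assumes "finite A" shows "cis (\<Sum>i\<in>A. f i) = (\<Prod>i\<in>A. cis (f i))"
  using assms
proof (induct rule: finite_induct)
  case empty show ?case by simp
next
  case (insert x F)
  have "cis (\<Sum>i\<in>insert x F. f i) = cis (f x + (\<Sum>i\<in>F. f i))" using insert by simp
  also have "\<dots> = cis (f x) * cis (\<Sum>i\<in>F. f i)" by (rule cis_mult[symmetric])
  also have "\<dots> = (\<Prod>i\<in>insert x F. cis (f i))" using insert by simp
  finally show ?case .
qed

lemma norm_sq_Basis: "norm (x::'a::euclidean_space)^2 = (\<Sum>b\<in>Basis. (x \<bullet> b)^2)"
  by (subst power2_norm_eq_inner, subst euclidean_inner) (simp add: power2_eq_square)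

lemma gaussD:
  fixes e :: real and z :: "'a::euclidean_space"
  assumes e: "e > 0"
  shows "integrable lborel (\<lambda>\<xi>::'a. exp (-pi*e*norm \<xi>^2))"
    and "(\<integral>\<xi>. complex_of_real (exp (-pi*e*norm \<xi>^2)) * cis (-2*pi*(z \<bullet> \<xi>)) \<partial>lborel)
          = complex_of_real (exp (-pi*norm z^2/e) / sqrt e ^ DIM('a))"
proof -
  have ex: "\<And>\<xi>::'a. exp (-pi*e*norm \<xi>^2) = (\<Prod>b\<in>Basis. exp (-pi*e*(\<xi> \<bullet> b)^2))"
  proof -
    fix \<xi> :: 'a
    have "-pi*e*norm \<xi>^2 = (\<Sum>b\<in>Basis. -pi*e*(\<xi> \<bullet> b)^2)"
      by (simp add: norm_sq_Basis sum_distrib_left)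
    then show "exp (-pi*e*norm \<xi>^2) = (\<Prod>b\<in>Basis. exp (-pi*e*(\<xi> \<bullet> b)^2))"
      by (simp only: exp_sum finite_Basis)
  qed
  show "integrable lborel (\<lambda>\<xi>::'a. exp (-pi*e*norm \<xi>^2))"
    unfolding ex using gauss1(1)[OF e] by (rule lborel_prod_integrable_integral(1)[where f="\<lambda>b t. exp (-pi*e*t^2)"])
  have cx: "\<And>\<xi>::'a. complex_of_real (exp (-pi*e*norm \<xi>^2)) * cis (-2*pi*(z \<bullet> \<xi>))
     = (\<Prod>b\<in>Basis. complex_of_real (exp (-pi*e*(\<xi> \<bullet> b)^2)) * cis (-2*pi*(z \<bullet> b)*(\<xi> \<bullet> b)))"
  proof -
    fix \<xi> :: 'a
    have c2: "cis (-2*pi*(z \<bullet> \<xi>)) = (\<Prod>b\<in>Basis. cis (-2*pi*(z \<bullet> b)*(\<xi> \<bullet> b)))"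
      by (simp add: euclidean_inner[of z \<xi>] sum_distrib_left cis_sum[symmetric] mult.assoc)
    have c1: "complex_of_real (exp (-pi*e*norm \<xi>^2)) = (\<Prod>b\<in>Basis. complex_of_real (exp (-pi*e*(\<xi> \<bullet> b)^2)))"
      unfolding ex by (rule of_real_prod)
    show "?thesis \<xi>" unfolding c1 c2 prod.distrib by (rule refl)
  qed
  have "(\<integral>\<xi>. complex_of_real (exp (-pi*e*norm \<xi>^2)) * cis (-2*pi*(z \<bullet> \<xi>)) \<partial>lborel)
      = (\<Prod>b\<in>(Basis::'a set). (\<integral>t. complex_of_real (exp (-pi*e*t^2)) * cis (-2*pi*(z \<bullet> b)*t) \<partial>lborel))"
    unfolding cx
  proof (rule lborel_prod_integrable_integral(2)[where f="\<lambda>b t. complex_of_real (exp (-pi*e*t^2)) * cis (-2*pi*(z \<bullet> b)*t)"])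
    fix b :: 'a
    show "integrable lborel (\<lambda>t. complex_of_real (exp (-pi*e*t^2)) * cis (-2*pi*(z \<bullet> b)*t))"
      by (rule Bochner_Integration.integrable_bound[OF gauss1(1)[OF e]]) (measurable, auto simp: norm_mult)
  qed
  also have "\<dots> = (\<Prod>b\<in>(Basis::'a set). complex_of_real (exp (-pi*(z \<bullet> b)^2/e) / sqrt e))"
    using gauss1(2)[OF e] by simp
  also have "\<dots> = complex_of_real (exp (-pi*norm z^2/e) / sqrt e ^ DIM('a))"
  proof -
    have "-pi*norm z^2/e = (\<Sum>b\<in>(Basis::'a set). -pi*(z \<bullet> b)^2/e)"
      by (simp add: norm_sq_Basis sum_distrib_left sum_divide_distrib)
    then have "exp (-pi*norm z^2/e) = (\<Prod>b\<in>(Basis::'a set). exp (-pi*(z \<bullet> b)^2/e))"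
      by (simp only: exp_sum finite_Basis)
    moreover have "(\<Prod>b\<in>(Basis::'a set). exp (-pi*(z \<bullet> b)^2/e) / sqrt e)
       = (\<Prod>b\<in>(Basis::'a set). exp (-pi*(z \<bullet> b)^2/e)) / sqrt e ^ DIM('a)"
      by (simp add: prod_dividef)
    ultimately show ?thesis by (simp only: of_real_prod[symmetric])
  qed
  finally show "(\<integral>\<xi>. complex_of_real (exp (-pi*e*norm \<xi>^2)) * cis (-2*pi*(z \<bullet> \<xi>)) \<partial>lborel)
          = complex_of_real (exp (-pi*norm z^2/e) / sqrt e ^ DIM('a))" .
qed

definition FT :: "('a::euclidean_space \<Rightarrow> real) \<Rightarrow> 'a \<Rightarrow> complex" where
  "FT D \<xi> = (\<integral>x. cis (-2*pi*(x \<bullet> \<xi>)) * complex_of_real (D x) \<partial>lborel)"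

lemma FT_measurable:
  assumes [measurable]: "D \<in> borel_measurable lborel"
  shows "FT D \<in> borel_measurable lborel"
  unfolding FT_def by measurable

lemma nn_integral_lborel_translate:
  fixes f :: "'a::euclidean_space \<Rightarrow> ennreal"
  assumes [measurable]: "f \<in> borel_measurable borel"
  shows "(\<integral>\<^sup>+y. f (c + y) \<partial>lborel) = (\<integral>\<^sup>+y. f y \<partial>lborel)"
proof -
  have "(\<integral>\<^sup>+y. f y \<partial>lborel) = (\<integral>\<^sup>+y. f y \<partial>(distr lborel borel ((+) c)))"
    by (simp add: lborel_distr_plus)
  also have "\<dots> = (\<integral>\<^sup>+y. f (c + y) \<partial>lborel)"
    by (subst nn_integral_distr) auto
  finally show ?thesis by simp
qed

lemma integral_lborel_translate:
  fixes f :: "'a::euclidean_space \<Rightarrow> 'b::{banach, second_countable_topology}"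
  assumes [measurable]: "f \<in> borel_measurable borel"
  shows "(\<integral>y. f (c + y) \<partial>lborel) = (\<integral>y. f y \<partial>lborel)"
proof -
  have "(\<integral>y. f y \<partial>lborel) = (\<integral>y. f y \<partial>(distr lborel borel ((+) c)))"
    by (simp add: lborel_distr_plus)
  also have "\<dots> = (\<integral>y. f (c + y) \<partial>lborel)"
    by (subst integral_distr) auto
  finally show ?thesis by simp
qed

lemma integrable_prod_abs:
  fixes g :: "'a::euclidean_space \<Rightarrow> real" and a :: "'b::euclidean_space \<Rightarrow> real"
  assumes g: "integrable lborel g" and a: "integrable lborel a"
  shows "integrable (lborel \<Otimes>\<^sub>M lborel) (\<lambda>z. \<bar>g (fst z)\<bar> * \<bar>a (snd z)\<bar>)"
proof -
  have [measurable]: "g \<in> borel_measurable lborel" "a \<in> borel_measurable lborel" using g a by auto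
  have "(\<integral>\<^sup>+z. ennreal (norm (\<bar>g (fst z)\<bar> * \<bar>a (snd z)\<bar>)) \<partial>(lborel \<Otimes>\<^sub>M lborel))
      = (\<integral>\<^sup>+u. \<integral>\<^sup>+v. ennreal (\<bar>g u\<bar>) * ennreal (\<bar>a v\<bar>) \<partial>lborel \<partial>lborel)"
    by (subst lborel.nn_integral_fst[symmetric]) (auto simp: ennreal_mult)
  also have "\<dots> = (\<integral>\<^sup>+u. ennreal (\<bar>g u\<bar>) * (\<integral>\<^sup>+v. ennreal (\<bar>a v\<bar>) \<partial>lborel) \<partial>lborel)"
    by (simp add: nn_integral_cmult)
  also have "\<dots> = (\<integral>\<^sup>+u. ennreal (\<bar>g u\<bar>) \<partial>lborel) * (\<integral>\<^sup>+v. ennreal (\<bar>a v\<bar>) \<partial>lborel)"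
    by (simp add: nn_integral_multc)
  also have "\<dots> < \<infinity>" using g a by (simp add: integrable_iff_bounded ennreal_mult_less_top)
  finally show ?thesis by (simp add: integrable_iff_bounded)
qed

lemma fubini_bounded:
  fixes g :: "'a::euclidean_space \<Rightarrow> real" and a :: "'b::euclidean_space \<Rightarrow> real"
    and c :: "'a \<Rightarrow> 'b \<Rightarrow> complex"
  assumes g: "integrable lborel g" and a: "integrable lborel a"
    and c: "case_prod c \<in> borel_measurable (lborel \<Otimes>\<^sub>M lborel)" and bnd: "\<And>u v. cmod (c u v) \<le> M"
  shows "(\<integral>u. (\<integral>v. complex_of_real (g u * a v) * c u v \<partial>lborel) \<partial>lborel)
       = (\<integral>v. (\<integral>u. complex_of_real (g u * a v) * c u v \<partial>lborel) \<partial>lborel)"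
proof -
  have [measurable]: "g \<in> borel_measurable lborel" "a \<in> borel_measurable lborel" using g a by auto
  have M0: "0 \<le> M" using bnd[of undefined undefined] norm_ge_zero[of "c undefined undefined"] by linarith
  have i1: "integrable (lborel \<Otimes>\<^sub>M lborel) (\<lambda>z. M * (\<bar>g (fst z)\<bar> * \<bar>a (snd z)\<bar>))"
    using integrable_prod_abs[OF g a] by simp
  have "integrable (lborel \<Otimes>\<^sub>M lborel) (case_prod (\<lambda>u v. complex_of_real (g u * a v) * c u v))"
  proof (rule Bochner_Integration.integrable_bound[OF i1])
    show "case_prod (\<lambda>u v. complex_of_real (g u * a v) * c u v) \<in> borel_measurable (lborel \<Otimes>\<^sub>M lborel)"
      using c by measurable
    show "AE z in lborel \<Otimes>\<^sub>M lborel. norm (case_prod (\<lambda>u v. complex_of_real (g u * a v) * c u v) z)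
        \<le> norm (M * (\<bar>g (fst z)\<bar> * \<bar>a (snd z)\<bar>))"
    proof (rule AE_I2)
      fix z :: "'a \<times> 'b"
      obtain u v where z: "z = (u, v)" by (cases z)
      have "cmod (complex_of_real (g u * a v) * c u v) = \<bar>g u\<bar> * \<bar>a v\<bar> * cmod (c u v)"
        by (simp add: norm_mult abs_mult)
      also have "\<dots> \<le> \<bar>g u\<bar> * \<bar>a v\<bar> * M" by (intro mult_left_mono bnd) simp
      finally show "norm (case_prod (\<lambda>u v. complex_of_real (g u * a v) * c u v) z)
        \<le> norm (M * (\<bar>g (fst z)\<bar> * \<bar>a (snd z)\<bar>))" using M0 by (simp add: z abs_mult mult_ac)
    qed
  qed
  then show ?thesis by (rule lborel_pair.Fubini_integral[symmetric])
qed

lemma gauss_kernel: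
  fixes e :: real assumes e: "e > 0"
  defines "K \<equiv> (\<lambda>z::'a::euclidean_space. exp (-pi*norm z^2/e) / sqrt e ^ DIM('a))"
  shows "integrable lborel K" "(\<integral>\<^sup>+z. ennreal (K z) \<partial>lborel) = 1" "\<And>z. 0 \<le> K z" "\<And>z. K z \<le> 1 / sqrt e ^ DIM('a)"
proof -
  have e': "1/e > 0" using e by simp
  have Keq: "K = (\<lambda>z. exp (-pi*(1/e)*norm z^2) / sqrt e ^ DIM('a))"
    unfolding K_def by (simp add: fun_eq_iff)
  show int: "integrable lborel K" unfolding Keq
    using gaussD(1)[OF e', where 'a='a] by simp
  have "(\<integral>\<xi>. complex_of_real (exp (-pi*(1/e)*norm \<xi>^2)) * cis (-2*pi*((0::'a) \<bullet> \<xi>)) \<partial>lborel)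
          = complex_of_real (exp (-pi*norm (0::'a)^2/(1/e)) / sqrt (1/e) ^ DIM('a))"
    by (rule gaussD(2)[OF e'])
  then have "complex_of_real (\<integral>\<xi>. exp (-pi*(1/e)*norm (\<xi>::'a)^2) \<partial>lborel) = complex_of_real (1 / sqrt (1/e) ^ DIM('a))"
    by simp
  then have "(\<integral>\<xi>. exp (-pi*(1/e)*norm (\<xi>::'a)^2) \<partial>lborel) = 1 / sqrt (1/e) ^ DIM('a)"
    by (simp only: of_real_eq_iff)
  then have I1: "integral\<^sup>L lborel K = 1"
    unfolding Keq using e by (simp add: real_sqrt_divide power_divide)
  show K0: "\<And>z. 0 \<le> K z" unfolding K_def using e by (intro divide_nonneg_nonneg) auto
  show "\<And>z. K z \<le> 1 / sqrt e ^ DIM('a)" unfolding K_def using e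
    by (intro divide_right_mono) auto
  show "(\<integral>\<^sup>+z. ennreal (K z) \<partial>lborel) = 1"
    using I1 int K0 by (subst nn_integral_eq_integral) auto
qed

lemma borel_measurable_cnj'[measurable]: "cnj \<in> borel_measurable borel"
  by (intro borel_measurable_continuous_onI continuous_intros)

lemma norm_integral_le_nn:
  fixes f :: "'a \<Rightarrow> 'b::{banach, second_countable_topology}"
  shows "ennreal (norm (integral\<^sup>L M f)) \<le> (\<integral>\<^sup>+x. ennreal (norm (f x)) \<partial>M)"
proof (cases "integrable M f")
  case True then show ?thesis by (rule integral_norm_bound_ennreal)
next
  case False then show ?thesis by (simp add: not_integrable_integral_eq)
qed

lemma amgm_abs: "\<bar>a\<bar> * \<bar>b\<bar> \<le> a^2/2 + b^2/2" for a b :: real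
proof -
  have "0 \<le> (\<bar>a\<bar> - \<bar>b\<bar>)^2" by simp
  then show ?thesis by (simp add: power2_diff power2_abs field_simps)
qed

lemma pair_meas_cont:
  fixes f :: "'a::euclidean_space \<times> 'b::euclidean_space \<Rightarrow> 'c::topological_space"
  assumes "continuous_on UNIV f" shows "f \<in> borel_measurable (lborel \<Otimes>\<^sub>M lborel)"
  using assms by (simp add: lborel_prod borel_measurable_continuous_onI)

lemma bessel_gauss:
  fixes D :: "'a::euclidean_space \<Rightarrow> real" and e :: real
  assumes Dint: "integrable lborel D" and D1: "\<And>x. \<bar>D x\<bar> \<le> 1" and e: "e > 0"
  shows "(\<integral>\<^sup>+\<xi>. ennreal (exp (-pi*e*norm \<xi>^2) * (cmod (FT D \<xi>))^2) \<partial>lborel)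
         \<le> (\<integral>\<^sup>+x. ennreal ((D x)^2) \<partial>lborel)"
proof -
  have Dm[measurable]: "D \<in> borel_measurable lborel" using Dint by auto
  define g where "g \<xi> = exp (-pi*e*norm \<xi>^2)" for \<xi> :: 'a
  define K where "K z = exp (-pi*norm z^2/e) / sqrt e ^ DIM('a)" for z :: 'a
  define L where "L = (\<integral>x. \<bar>D x\<bar> \<partial>lborel)"
  have gint: "integrable lborel g" unfolding g_def by (rule gaussD(1)[OF e])
  have gm[measurable]: "g \<in> borel_measurable lborel" using gint by auto
  have g0: "0 \<le> g \<xi>" for \<xi> unfolding g_def by simp
  have gK: "(\<integral>\<xi>. complex_of_real (g \<xi>) * cis (-2*pi*(z \<bullet> \<xi>)) \<partial>lborel) = complex_of_real (K z)" for z
    unfolding g_def K_def by (rule gaussD(2)[OF e])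
  have Kint: "integrable lborel K" and K1: "(\<integral>\<^sup>+z. ennreal (K z) \<partial>lborel) = 1"
    and K0: "\<And>z. 0 \<le> K z" and Kb: "\<And>z. K z \<le> 1 / sqrt e ^ DIM('a)"
    using gauss_kernel[OF e, where 'a='a] unfolding K_def[abs_def] by auto
  have Km[measurable]: "K \<in> borel_measurable borel" unfolding K_def[abs_def] by measurable
  have FTm[measurable]: "FT D \<in> borel_measurable lborel" by (rule FT_measurable) simp
  have FTb: "cmod (FT D \<xi>) \<le> L" for \<xi>
    unfolding FT_def L_def
    by (rule order_trans[OF integral_norm_bound]) (simp add: norm_mult)
  define C where "C \<xi> = cnj (FT D \<xi>)" for \<xi>
  have C_eq: "C \<xi> = (\<integral>y. cis (2*pi*(y \<bullet> \<xi>)) * complex_of_real (D y) \<partial>lborel)" for \<xi>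
    unfolding C_def FT_def by (subst Bochner_Integration.integral_cnj[symmetric]) (simp add: cis_cnj)
  have Cm[measurable]: "C \<in> borel_measurable lborel" unfolding C_def[abs_def] by measurable
  have Cb: "cmod (C \<xi>) \<le> L" for \<xi> unfolding C_def using FTb by simp
  have L0: "L \<ge> 0" unfolding L_def by simp

  have A: "complex_of_real (g \<xi> * (cmod (FT D \<xi>))^2)
      = (\<integral>x. complex_of_real (g \<xi> * D x) * (cis (-2*pi*(x \<bullet> \<xi>)) * C \<xi>) \<partial>lborel)" for \<xi>
  proof -
    have "complex_of_real (g \<xi> * (cmod (FT D \<xi>))^2) = complex_of_real (g \<xi>) * (FT D \<xi> * C \<xi>)"
      unfolding C_def of_real_mult complex_norm_square by (rule refl)
    also have "\<dots> = (\<integral>x. complex_of_real (g \<xi>) * ((cis (-2*pi*(x \<bullet> \<xi>)) * complex_of_real (D x)) * C \<xi>) \<partial>lborel)"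
      unfolding FT_def by (simp only: integral_mult_left_zero integral_mult_right_zero)
    also have "\<dots> = (\<integral>x. complex_of_real (g \<xi> * D x) * (cis (-2*pi*(x \<bullet> \<xi>)) * C \<xi>) \<partial>lborel)"
      by (intro Bochner_Integration.integral_cong refl) (simp add: mult_ac)
    finally show ?thesis .
  qed
  have Cx: "(\<integral>\<xi>. complex_of_real (g \<xi> * D x) * (cis (-2*pi*(x \<bullet> \<xi>)) * C \<xi>) \<partial>lborel)
      = complex_of_real (D x * (\<integral>y. D y * K (x - y) \<partial>lborel))" for x
  proof -
    have e1: "complex_of_real (g \<xi> * D x) * (cis (-2*pi*(x \<bullet> \<xi>)) * C \<xi>)
       = complex_of_real (D x) * (\<integral>y. complex_of_real (g \<xi> * D y) * cis (-2*pi*((x - y) \<bullet> \<xi>)) \<partial>lborel)" for \<xi>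
    proof -
      have "cis (-2*pi*(x \<bullet> \<xi>)) * C \<xi> = (\<integral>y. cis (-2*pi*(x \<bullet> \<xi>)) * (cis (2*pi*(y \<bullet> \<xi>)) * complex_of_real (D y)) \<partial>lborel)"
        unfolding C_eq by (simp only: integral_mult_right_zero)
      also have "\<dots> = (\<integral>y. complex_of_real (D y) * cis (-2*pi*((x - y) \<bullet> \<xi>)) \<partial>lborel)"
        by (intro Bochner_Integration.integral_cong refl)
           (simp add: cis_mult inner_diff_left algebra_simps)
      finally have "cis (-2*pi*(x \<bullet> \<xi>)) * C \<xi> = (\<integral>y. complex_of_real (D y) * cis (-2*pi*((x - y) \<bullet> \<xi>)) \<partial>lborel)" .
      then show ?thesis
        by (simp add: integral_mult_right_zero[symmetric] mult_ac)
    qed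
    have "(\<integral>\<xi>. complex_of_real (g \<xi> * D x) * (cis (-2*pi*(x \<bullet> \<xi>)) * C \<xi>) \<partial>lborel)
       = complex_of_real (D x) * (\<integral>\<xi>. (\<integral>y. complex_of_real (g \<xi> * D y) * cis (-2*pi*((x - y) \<bullet> \<xi>)) \<partial>lborel) \<partial>lborel)"
      unfolding e1 by (simp only: integral_mult_right_zero)
    also have "(\<integral>\<xi>. (\<integral>y. complex_of_real (g \<xi> * D y) * cis (-2*pi*((x - y) \<bullet> \<xi>)) \<partial>lborel) \<partial>lborel)
       = (\<integral>y. (\<integral>\<xi>. complex_of_real (g \<xi> * D y) * cis (-2*pi*((x - y) \<bullet> \<xi>)) \<partial>lborel) \<partial>lborel)"
      by (rule fubini_bounded[OF gint Dint, where M=1])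
         (rule pair_meas_cont, simp add: case_prod_beta', intro continuous_intros, simp)
    also have "\<dots> = (\<integral>y. complex_of_real (D y * K (x - y)) \<partial>lborel)"
    proof (intro Bochner_Integration.integral_cong refl)
      fix y
      have "(\<integral>\<xi>. complex_of_real (g \<xi> * D y) * cis (-2*pi*((x - y) \<bullet> \<xi>)) \<partial>lborel)
          = (\<integral>\<xi>. complex_of_real (D y) * (complex_of_real (g \<xi>) * cis (-2*pi*((x - y) \<bullet> \<xi>))) \<partial>lborel)"
        by (simp add: mult_ac)
      also have "\<dots> = complex_of_real (D y) * complex_of_real (K (x - y))"
        by (simp only: integral_mult_right_zero gK)
      finally show "(\<integral>\<xi>. complex_of_real (g \<xi> * D y) * cis (-2*pi*((x - y) \<bullet> \<xi>)) \<partial>lborel)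
          = complex_of_real (D y * K (x - y))" by simp
    qed
    also have "\<dots> = complex_of_real (\<integral>y. D y * K (x - y) \<partial>lborel)" by (rule integral_complex_of_real)
    finally show ?thesis by simp
  qed
  have main: "complex_of_real (\<integral>\<xi>. g \<xi> * (cmod (FT D \<xi>))^2 \<partial>lborel)
     = complex_of_real (\<integral>x. D x * (\<integral>y. D y * K (x - y) \<partial>lborel) \<partial>lborel)"
  proof -
    have "complex_of_real (\<integral>\<xi>. g \<xi> * (cmod (FT D \<xi>))^2 \<partial>lborel)
        = (\<integral>\<xi>. complex_of_real (g \<xi> * (cmod (FT D \<xi>))^2) \<partial>lborel)" by (rule integral_complex_of_real[symmetric])
    also have "\<dots> = (\<integral>\<xi>. (\<integral>x. complex_of_real (g \<xi> * D x) * (cis (-2*pi*(x \<bullet> \<xi>)) * C \<xi>) \<partial>lborel) \<partial>lborel)"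
      by (simp only: A)
    also have "\<dots> = (\<integral>x. (\<integral>\<xi>. complex_of_real (g \<xi> * D x) * (cis (-2*pi*(x \<bullet> \<xi>)) * C \<xi>) \<partial>lborel) \<partial>lborel)"
      by (rule fubini_bounded[OF gint Dint, where M=L]) (measurable, simp add: norm_mult Cb)
    also have "\<dots> = (\<integral>x. complex_of_real (D x * (\<integral>y. D y * K (x - y) \<partial>lborel)) \<partial>lborel)"
      by (simp only: Cx)
    also have "\<dots> = complex_of_real (\<integral>x. D x * (\<integral>y. D y * K (x - y) \<partial>lborel) \<partial>lborel)" by (rule integral_complex_of_real)
    finally show ?thesis .
  qed
  then have main': "(\<integral>\<xi>. g \<xi> * (cmod (FT D \<xi>))^2 \<partial>lborel) = (\<integral>x. D x * (\<integral>y. D y * K (x - y) \<partial>lborel) \<partial>lborel)"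
    by (simp only: of_real_eq_iff)
  define J where "J x = (\<integral>y. D y * K (x - y) \<partial>lborel)" for x
  have Jm[measurable]: "J \<in> borel_measurable lborel" unfolding J_def[abs_def] by measurable
  have Kt1: "(\<integral>\<^sup>+y. ennreal (K (x - y)) \<partial>lborel) = 1" for x
  proof -
    have "\<And>y. norm (x - y) = norm (-x + y)" by (metis add.commute diff_conv_add_uminus norm_minus_commute)
    then have "(\<lambda>y. ennreal (K (x - y))) = (\<lambda>y. ennreal (K (-x + y)))" by (simp add: K_def)
    then show ?thesis using nn_integral_lborel_translate[of "\<lambda>y. ennreal (K y)" "-x"] K1 by simp
  qed
  have Kt2: "(\<integral>\<^sup>+x. ennreal (K (x - y)) \<partial>lborel) = 1" for y
  proof -
    have "(\<lambda>x. ennreal (K (x - y))) = (\<lambda>x. ennreal (K (-y + x)))" by simp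
    then show ?thesis using nn_integral_lborel_translate[of "\<lambda>y. ennreal (K y)" "-y"] K1 by simp
  qed
  have intg: "integrable lborel (\<lambda>\<xi>. g \<xi> * (cmod (FT D \<xi>))^2)"
  proof (rule Bochner_Integration.integrable_bound)
    show "integrable lborel (\<lambda>\<xi>. L^2 * g \<xi>)" using gint by simp
    show "(\<lambda>\<xi>. g \<xi> * (cmod (FT D \<xi>))^2) \<in> borel_measurable lborel" by measurable
    show "AE \<xi> in lborel. norm (g \<xi> * (cmod (FT D \<xi>))^2) \<le> norm (L^2 * g \<xi>)"
    proof (rule AE_I2)
      fix \<xi>
      have "(cmod (FT D \<xi>))^2 \<le> L^2" using FTb[of \<xi>] by (intro power_mono) auto
      then show "norm (g \<xi> * (cmod (FT D \<xi>))^2) \<le> norm (L^2 * g \<xi>)"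
        using g0[of \<xi>] by (simp add: abs_mult mult_left_mono mult.commute)
    qed
  qed
  have "(\<integral>\<^sup>+\<xi>. ennreal (exp (-pi*e*norm \<xi>^2) * (cmod (FT D \<xi>))^2) \<partial>lborel)
      = (\<integral>\<^sup>+\<xi>. ennreal (g \<xi> * (cmod (FT D \<xi>))^2) \<partial>lborel)" by (simp add: g_def)
  also have "\<dots> = ennreal (\<integral>\<xi>. g \<xi> * (cmod (FT D \<xi>))^2 \<partial>lborel)"
    using intg g0 by (subst nn_integral_eq_integral) auto
  also have "\<dots> = ennreal (\<integral>x. D x * J x \<partial>lborel)" using main' by (simp add: J_def)
  also have "\<dots> \<le> ennreal (norm (\<integral>x. D x * J x \<partial>lborel))" by (intro ennreal_leI) simp
  also have "\<dots> \<le> (\<integral>\<^sup>+x. ennreal (norm (D x * J x)) \<partial>lborel)" by (rule norm_integral_le_nn)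
  also have "\<dots> = (\<integral>\<^sup>+x. ennreal \<bar>D x\<bar> * ennreal (norm (J x)) \<partial>lborel)"
    by (simp add: abs_mult ennreal_mult)
  also have "\<dots> \<le> (\<integral>\<^sup>+x. ennreal \<bar>D x\<bar> * (\<integral>\<^sup>+y. ennreal (norm (D y * K (x - y))) \<partial>lborel) \<partial>lborel)"
    unfolding J_def by (intro nn_integral_mono mult_left_mono norm_integral_le_nn) auto
  also have "\<dots> = (\<integral>\<^sup>+x. (\<integral>\<^sup>+y. ennreal (\<bar>D x\<bar> * \<bar>D y\<bar> * K (x - y)) \<partial>lborel) \<partial>lborel)"
    using K0 by (simp add: nn_integral_cmult[symmetric] abs_mult ennreal_mult mult.assoc)
  also have "\<dots> \<le> (\<integral>\<^sup>+x. (\<integral>\<^sup>+y. ennreal ((D x)^2/2 * K (x - y)) + ennreal ((D y)^2/2 * K (x - y)) \<partial>lborel) \<partial>lborel)"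
  proof (intro nn_integral_mono)
    fix x y
    have "\<bar>D x\<bar> * \<bar>D y\<bar> * K (x - y) \<le> ((D x)^2/2 + (D y)^2/2) * K (x - y)"
      using K0[of "x - y"] by (intro mult_right_mono amgm_abs) auto
    then show "ennreal (\<bar>D x\<bar> * \<bar>D y\<bar> * K (x - y)) \<le> ennreal ((D x)^2/2 * K (x - y)) + ennreal ((D y)^2/2 * K (x - y))"
      using K0[of "x - y"] by (simp add: ennreal_plus[symmetric] distrib_right del: ennreal_plus)
  qed
  also have "\<dots> = (\<integral>\<^sup>+x. (\<integral>\<^sup>+y. ennreal ((D x)^2/2 * K (x - y)) \<partial>lborel) \<partial>lborel)
       + (\<integral>\<^sup>+x. (\<integral>\<^sup>+y. ennreal ((D y)^2/2 * K (x - y)) \<partial>lborel) \<partial>lborel)"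
    by (simp add: nn_integral_add)
  also have "(\<integral>\<^sup>+x. (\<integral>\<^sup>+y. ennreal ((D x)^2/2 * K (x - y)) \<partial>lborel) \<partial>lborel)
       = (\<integral>\<^sup>+x. ennreal ((D x)^2/2) \<partial>lborel)"
  proof (intro nn_integral_cong)
    fix x
    have "(\<integral>\<^sup>+y. ennreal ((D x)^2/2 * K (x - y)) \<partial>lborel) = (\<integral>\<^sup>+y. ennreal ((D x)^2/2) * ennreal (K (x - y)) \<partial>lborel)"
      using K0 by (intro nn_integral_cong ennreal_mult) auto
    also have "\<dots> = ennreal ((D x)^2/2) * (\<integral>\<^sup>+y. ennreal (K (x - y)) \<partial>lborel)"
      by (rule nn_integral_cmult) measurable
    also have "\<dots> = ennreal ((D x)^2/2)" by (simp add: Kt1)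
    finally show "(\<integral>\<^sup>+y. ennreal ((D x)^2/2 * K (x - y)) \<partial>lborel) = ennreal ((D x)^2/2)" .
  qed
  also have "(\<integral>\<^sup>+x. (\<integral>\<^sup>+y. ennreal ((D y)^2/2 * K (x - y)) \<partial>lborel) \<partial>lborel)
       = (\<integral>\<^sup>+y. (\<integral>\<^sup>+x. ennreal ((D y)^2/2 * K (x - y)) \<partial>lborel) \<partial>lborel)"
    by (rule lborel_pair.Fubini'[symmetric]) measurable
  also have "\<dots> = (\<integral>\<^sup>+y. ennreal ((D y)^2/2) \<partial>lborel)"
  proof (intro nn_integral_cong)
    fix y
    have "(\<integral>\<^sup>+x. ennreal ((D y)^2/2 * K (x - y)) \<partial>lborel) = (\<integral>\<^sup>+x. ennreal ((D y)^2/2) * ennreal (K (x - y)) \<partial>lborel)"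
      using K0 by (intro nn_integral_cong ennreal_mult) auto
    also have "\<dots> = ennreal ((D y)^2/2) * (\<integral>\<^sup>+x. ennreal (K (x - y)) \<partial>lborel)"
      by (rule nn_integral_cmult) measurable
    also have "\<dots> = ennreal ((D y)^2/2)" by (simp add: Kt2)
    finally show "(\<integral>\<^sup>+x. ennreal ((D y)^2/2 * K (x - y)) \<partial>lborel) = ennreal ((D y)^2/2)" .
  qed
  also have "(\<integral>\<^sup>+x. ennreal ((D x)^2/2) \<partial>lborel) + (\<integral>\<^sup>+y. ennreal ((D y)^2/2) \<partial>lborel)
      = (\<integral>\<^sup>+x. ennreal ((D x)^2) \<partial>lborel)"
    by (simp add: nn_integral_add[symmetric] ennreal_plus[symmetric] del: ennreal_plus)
  finally show ?thesis .
qed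

lemma emeasure_lebesgue_borel:
  assumes "A \<in> sets borel"
  shows "emeasure lebesgue A = emeasure lborel (A::'a::euclidean_space set)"
proof -
  have "emeasure lebesgue A = (\<integral>\<^sup>+x. indicator A x \<partial>lebesgue)"
    using assms by (subst nn_integral_indicator) auto
  also have "\<dots> = (\<integral>\<^sup>+x. indicator A x \<partial>lborel)" by (rule nn_integral_completion)
  also have "\<dots> = emeasure lborel A" using assms by (subst nn_integral_indicator) auto
  finally show ?thesis .
qed

lemma integrable_lborel_translate:
  fixes f :: "'a::euclidean_space \<Rightarrow> 'b::{banach, second_countable_topology}"
  assumes f: "integrable lborel f"
  shows "integrable lborel (\<lambda>x. f (c + x))"
proof -
  have [measurable]: "f \<in> borel_measurable borel" using f by auto
  have "integrable (distr lborel borel ((+) c)) f" using f by (simp add: lborel_distr_plus)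
  then show ?thesis by (subst (asm) integrable_distr_eq) auto
qed

lemma FT_shift:
  fixes E :: "'a::euclidean_space set"
  assumes E[measurable]: "E \<in> sets borel" and Efin: "emeasure lborel E < \<infinity>"
  shows "FT (\<lambda>x. indicator E x - indicator E (h + x)) \<xi> = (1 - cis (2*pi*(h \<bullet> \<xi>))) * FT (indicator E) \<xi>"
proof -
  have iE: "integrable lborel (indicator E :: 'a \<Rightarrow> real)"
    using Efin by (simp add: integrable_indicator_iff)
  have i1: "integrable lborel (\<lambda>x. cis (-2*pi*(x \<bullet> \<xi>)) * complex_of_real (indicator E x))"
    by (rule Bochner_Integration.integrable_bound[OF iE]) (measurable, simp add: norm_mult)
  have iE2: "integrable lborel (\<lambda>x. indicator E (h + x) :: real)"
    using integrable_lborel_translate[OF iE] .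
  have i2: "integrable lborel (\<lambda>x. cis (-2*pi*(x \<bullet> \<xi>)) * complex_of_real (indicator E (h + x)))"
    by (rule Bochner_Integration.integrable_bound[OF iE2]) (measurable, simp add: norm_mult)
  have "FT (\<lambda>x. indicator E x - indicator E (h + x)) \<xi>
     = (\<integral>x. cis (-2*pi*(x \<bullet> \<xi>)) * complex_of_real (indicator E x) - cis (-2*pi*(x \<bullet> \<xi>)) * complex_of_real (indicator E (h + x)) \<partial>lborel)"
    unfolding FT_def by (simp add: algebra_simps)
  also have "\<dots> = FT (indicator E) \<xi> - (\<integral>x. cis (-2*pi*(x \<bullet> \<xi>)) * complex_of_real (indicator E (h + x)) \<partial>lborel)"
    unfolding FT_def by (rule Bochner_Integration.integral_diff[OF i1 i2])
  also have "(\<integral>x. cis (-2*pi*(x \<bullet> \<xi>)) * complex_of_real (indicator E (h + x)) \<partial>lborel)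
      = (\<integral>x. cis (2*pi*(h \<bullet> \<xi>)) * (cis (-2*pi*((h + x) \<bullet> \<xi>)) * complex_of_real (indicator E (h + x))) \<partial>lborel)"
  proof (intro Bochner_Integration.integral_cong refl)
    fix x :: 'a
    have c: "cis (2*pi*(h \<bullet> \<xi>)) * cis (-2*pi*((h + x) \<bullet> \<xi>)) = cis (-2*pi*(x \<bullet> \<xi>))"
      by (simp add: cis_mult inner_add_left algebra_simps)
    show "cis (-2*pi*(x \<bullet> \<xi>)) * complex_of_real (indicator E (h + x))
      = cis (2*pi*(h \<bullet> \<xi>)) * (cis (-2*pi*((h + x) \<bullet> \<xi>)) * complex_of_real (indicator E (h + x)))"
      by (simp only: mult.assoc[symmetric] c)
  qed
  also have "\<dots> = cis (2*pi*(h \<bullet> \<xi>)) * (\<integral>x. cis (-2*pi*((h + x) \<bullet> \<xi>)) * complex_of_real (indicator E (h + x)) \<partial>lborel)"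
    by (rule integral_mult_right_zero)
  also have "(\<integral>x. cis (-2*pi*((h + x) \<bullet> \<xi>)) * complex_of_real (indicator E (h + x)) \<partial>lborel) = FT (indicator E) \<xi>"
    unfolding FT_def
    by (rule integral_lborel_translate[where f="\<lambda>x. cis (-2*pi*(x \<bullet> \<xi>)) * complex_of_real (indicator E x)"]) measurable
  finally show ?thesis by (simp add: algebra_simps)
qed

lemma fourier_borel:
  fixes E :: "'a::euclidean_space set"
  assumes E[measurable]: "E \<in> sets borel"
  shows "fourier_transform (char_fun E) \<xi> = FT (indicator E) \<xi>"
proof -
  have "char_fun E = (\<lambda>x. complex_of_real (indicator E x))"
    by (auto simp: fun_eq_iff char_fun_def)
  then show ?thesis
    unfolding fourier_transform_def FT_def by (simp add: integral_completion)
qed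

lemma gag_borel:
  fixes E :: "'a::euclidean_space set"
  assumes E[measurable]: "E \<in> sets borel" and p: "0 < p"
  shows "gagliardo_p \<eta> p E = (\<integral>\<^sup>+h. \<integral>\<^sup>+x. ennreal (\<bar>indicator E x - indicator E (h + x)\<bar> / norm h powr (real DIM('a) + \<eta> * p)) \<partial>lborel \<partial>lborel)"
proof -
  have pw: "norm (char_fun E x - char_fun E y) powr p = \<bar>indicator E x - indicator E y\<bar>" for x y :: 'a
    using p by (auto simp: char_fun_def indicator_def)
  have "gagliardo_p \<eta> p E = (\<integral>\<^sup>+x. \<integral>\<^sup>+y. ennreal (\<bar>indicator E x - indicator E y\<bar> / norm (x - y) powr (real DIM('a) + \<eta> * p)) \<partial>lborel \<partial>lborel)"
    unfolding gagliardo_p_def pw nn_integral_completion ..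
  also have "\<dots> = (\<integral>\<^sup>+x. \<integral>\<^sup>+h. ennreal (\<bar>indicator E x - indicator E (h + x)\<bar> / norm h powr (real DIM('a) + \<eta> * p)) \<partial>lborel \<partial>lborel)"
  proof (rule nn_integral_cong)
    fix x :: 'a
    define F where "F y = ennreal (\<bar>indicator E x - indicator E y\<bar> / norm (x - y) powr (real DIM('a) + \<eta> * p))" for y :: 'a
    have Fm: "F \<in> borel_measurable borel" unfolding F_def[abs_def] by measurable
    have "(\<integral>\<^sup>+y. ennreal (\<bar>indicator E x - indicator E y\<bar> / norm (x - y) powr (real DIM('a) + \<eta> * p)) \<partial>lborel)
       = (\<integral>\<^sup>+y. F y \<partial>lborel)" by (simp add: F_def)
    also have "\<dots> = (\<integral>\<^sup>+h. F (x + h) \<partial>lborel)"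
      by (rule nn_integral_lborel_translate[OF Fm, symmetric])
    also have "\<dots> = (\<integral>\<^sup>+h. ennreal (\<bar>indicator E x - indicator E (h + x)\<bar> / norm h powr (real DIM('a) + \<eta> * p)) \<partial>lborel)"
      by (rule nn_integral_cong) (simp add: F_def add.commute)
    finally show "(\<integral>\<^sup>+y. ennreal (\<bar>indicator E x - indicator E y\<bar> / norm (x - y) powr (real DIM('a) + \<eta> * p)) \<partial>lborel)
      = (\<integral>\<^sup>+h. ennreal (\<bar>indicator E x - indicator E (h + x)\<bar> / norm h powr (real DIM('a) + \<eta> * p)) \<partial>lborel)" .
  qed
  also have "\<dots> = (\<integral>\<^sup>+h. \<integral>\<^sup>+x. ennreal (\<bar>indicator E x - indicator E (h + x)\<bar> / norm h powr (real DIM('a) + \<eta> * p)) \<partial>lborel \<partial>lborel)"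
    by (rule lborel_pair.Fubini'[symmetric]) measurable
  finally show ?thesis .
qed

lemma cmod_one_minus_cis: "(cmod (1 - cis t))^2 = 2 - 2 * cos t"
proof -
  have "(cmod (1 - cis t))^2 = (1 - cos t)^2 + (sin t)^2" by (simp add: cmod_power2)
  also have "\<dots> = 2 - 2 * cos t" using sin_cos_squared_add[of t] by (simp add: power2_diff)
  finally show ?thesis .
qed

lemma hint_lower:
  fixes \<xi> :: "'a::euclidean_space" and s :: real
  assumes s: "0 < s"
  shows "ennreal (2 * measure lborel (ball (0::'a) 1) / 4^DIM('a) * norm \<xi> powr s)
     \<le> (\<integral>\<^sup>+h. ennreal ((cmod (1 - cis (2*pi*(h \<bullet> \<xi>))))^2 / norm h powr (real DIM('a) + s)) \<partial>lborel)"
proof (cases "\<xi> = 0")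
  case True then show ?thesis using s by simp
next
  case False
  define \<rho> where "\<rho> = norm \<xi>"
  have \<rho>: "\<rho> > 0" using False by (simp add: \<rho>_def)
  define c0 where "c0 = (1/(2*\<rho>^2)) *\<^sub>R \<xi>"
  define r where "r = 1/(4*\<rho>)"
  have r: "r > 0" using \<rho> by (simp add: r_def)
  define V where "V = measure lborel (ball (0::'a) 1)"
  have c0xi: "c0 \<bullet> \<xi> = 1/2" using \<rho> by (simp add: c0_def \<rho>_def power2_norm_eq_inner[symmetric])
  have nc0: "norm c0 = 1/(2*\<rho>)" using \<rho> by (simp add: c0_def \<rho>_def power2_eq_square)
  have pt: "2 * \<rho> powr (real DIM('a) + s) \<le> (cmod (1 - cis (2*pi*(h \<bullet> \<xi>))))^2 / norm h powr (real DIM('a) + s)"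
    if h: "h \<in> ball c0 r" for h
  proof -
    have dh: "norm (h - c0) < r" using h by (simp add: dist_norm norm_minus_commute)
    have "\<bar>(h - c0) \<bullet> \<xi>\<bar> \<le> norm (h - c0) * \<rho>" unfolding \<rho>_def by (rule Cauchy_Schwarz_ineq2)
    also have "\<dots> \<le> r * \<rho>" using dh \<rho> by (intro mult_right_mono) auto
    also have "r * \<rho> = 1/4" using \<rho> by (simp add: r_def)
    finally have "\<bar>(h - c0) \<bullet> \<xi>\<bar> \<le> 1/4" .
    moreover have "h \<bullet> \<xi> = 1/2 + (h - c0) \<bullet> \<xi>" using c0xi by (simp add: inner_diff_left)
    ultimately have hx: "1/4 \<le> h \<bullet> \<xi>" "h \<bullet> \<xi> \<le> 3/4" by auto
    have "cos (2*pi*(h \<bullet> \<xi>)) = - cos (2*pi*(h \<bullet> \<xi>) - pi)" by (simp add: cos_diff)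
    moreover have "0 \<le> cos (2*pi*(h \<bullet> \<xi>) - pi)"
      using hx pi_gt_zero by (intro cos_ge_zero) (auto simp: algebra_simps)
    ultimately have "cos (2*pi*(h \<bullet> \<xi>)) \<le> 0" by simp
    then have c2: "2 \<le> (cmod (1 - cis (2*pi*(h \<bullet> \<xi>))))^2" by (simp add: cmod_one_minus_cis)
    have "norm h \<le> norm c0 + norm (h - c0)" using norm_triangle_ineq[of c0 "h - c0"] by simp
    also have "\<dots> \<le> 1/(2*\<rho>) + r" using dh nc0 by simp
    also have "\<dots> \<le> 1/\<rho>" using \<rho> by (simp add: r_def field_simps)
    finally have nh: "norm h \<le> 1/\<rho>" .
    have "norm c0 \<le> norm h + norm (h - c0)" using norm_triangle_ineq4[of h "h - c0"] by simp
    then have "1/(2*\<rho>) - r \<le> norm h" using dh nc0 by simp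
    moreover have "0 < 1/(2*\<rho>) - r" using \<rho> by (simp add: r_def field_simps)
    ultimately have nh0: "0 < norm h" by linarith
    have "norm h powr (real DIM('a) + s) \<le> (1/\<rho>) powr (real DIM('a) + s)"
      using nh s by (intro powr_mono2) auto
    also have "\<dots> = 1 / \<rho> powr (real DIM('a) + s)" using \<rho> by (simp add: powr_divide)
    finally have p1: "norm h powr (real DIM('a) + s) \<le> 1 / \<rho> powr (real DIM('a) + s)" .
    have pp: "0 < norm h powr (real DIM('a) + s)" using nh0 by simp
    have "2 * \<rho> powr (real DIM('a) + s) = 2 / (1 / \<rho> powr (real DIM('a) + s))" by simp
    also have "\<dots> \<le> 2 / norm h powr (real DIM('a) + s)"
      using p1 pp \<rho> by (intro divide_left_mono mult_pos_pos) auto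
    also have "\<dots> \<le> (cmod (1 - cis (2*pi*(h \<bullet> \<xi>))))^2 / norm h powr (real DIM('a) + s)"
      using c2 pp by (intro divide_right_mono) auto
    finally show ?thesis .
  qed
  have "(\<integral>\<^sup>+h. ennreal (2 * \<rho> powr (real DIM('a) + s)) * indicator (ball c0 r) h \<partial>lborel)
     \<le> (\<integral>\<^sup>+h. ennreal ((cmod (1 - cis (2*pi*(h \<bullet> \<xi>))))^2 / norm h powr (real DIM('a) + s)) \<partial>lborel)"
    using pt by (intro nn_integral_mono) (auto simp: indicator_def intro!: ennreal_leI)
  moreover have "(\<integral>\<^sup>+h. ennreal (2 * \<rho> powr (real DIM('a) + s)) * indicator (ball c0 r) h \<partial>lborel)
     = ennreal (2 * \<rho> powr (real DIM('a) + s)) * emeasure lborel (ball c0 r)"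
    by (simp add: nn_integral_cmult_indicator)
  moreover have "emeasure lborel (ball c0 r) = ennreal (r ^ DIM('a) * V)"
    using emeasure_lborel_ball_finite[of c0 r] content_ball_conv_unit_ball[of r c0] r
    by (simp add: emeasure_eq_ennreal_measure V_def)
  moreover have "2 * \<rho> powr (real DIM('a) + s) * (r ^ DIM('a) * V) = 2 * V / 4^DIM('a) * norm \<xi> powr s"
  proof -
    have "\<rho> powr (real DIM('a) + s) = \<rho> ^ DIM('a) * \<rho> powr s" using \<rho> by (simp add: powr_add powr_realpow)
    moreover have "r ^ DIM('a) = 1 / (4 ^ DIM('a) * \<rho> ^ DIM('a))" by (simp add: r_def power_divide power_mult_distrib)
    ultimately show ?thesis using \<rho> by (simp add: \<rho>_def field_simps)
  qed
  ultimately show ?thesis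
    using \<rho> r by (simp add: ennreal_mult'[symmetric] V_def)
qed

lemma rearr:
  fixes A :: "'a::euclidean_space set" and s :: real
  assumes s: "0 < s" and A: "A \<in> sets borel" and Afin: "emeasure lborel A < \<infinity>"
  defines "m \<equiv> measure lborel A" and "V \<equiv> measure lborel (ball (0::'a) 1)"
  shows "ennreal (m / 2 * (m / (2*V)) powr (s / real DIM('a)))
     \<le> (\<integral>\<^sup>+\<xi>. indicator A \<xi> * ennreal (norm \<xi> powr s) \<partial>lborel)"
proof -
  have V: "V > 0" unfolding V_def by (rule content_ball_pos) simp
  have m0: "m \<ge> 0" unfolding m_def by simp
  define d where "d = real DIM('a)"
  have d: "d > 0" by (simp add: d_def)
  define r0 where "r0 = (m / (2*V)) powr (1/d)"
  have r00: "r0 \<ge> 0" by (simp add: r0_def)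
  have r0d: "r0 ^ DIM('a) = m / (2*V)"
  proof -
    have "r0 ^ DIM('a) = r0 powr d"
      by (cases "r0 = 0") (auto simp: d_def powr_realpow r00 order.strict_iff_order)
    also have "\<dots> = m / (2*V)" using d m0 V by (simp add: r0_def powr_powr)
    finally show ?thesis .
  qed
  let ?B = "ball (0::'a) r0"
  have mB: "measure lborel ?B = m / 2"
    using content_ball_conv_unit_ball[of r0 "0::'a"] r00 r0d V by (simp add: V_def)
  have Am[measurable]: "A \<in> sets lborel" using A by simp
  have "measure lborel (A - ?B) = measure lborel (A - (A \<inter> ?B))" by (rule arg_cong[where f="measure lborel"]) blast
  also have "\<dots> = m - measure lborel (A \<inter> ?B)"
    unfolding m_def using Afin A by (intro measure_Diff) auto
  finally have e1: "measure lborel (A - ?B) = m - measure lborel (A \<inter> ?B)" .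
  have e2: "measure lborel (A \<inter> ?B) \<le> measure lborel ?B"
    using emeasure_lborel_ball_finite[of 0 r0] A by (intro measure_mono_fmeasurable) (auto simp: fmeasurable_def)
  have mAB: "m / 2 \<le> measure lborel (A - ?B)" using mB e1 e2 by linarith
  have fin: "emeasure lborel (A - ?B) < \<infinity>"
    using Afin by (rule le_less_trans[rotated]) (intro emeasure_mono, auto simp: A)
  have "ennreal (m / 2 * (m / (2*V)) powr (s / real DIM('a))) = ennreal (r0 powr s) * ennreal (m / 2)"
    using m0 V d by (simp add: r0_def powr_powr d_def ennreal_mult'[symmetric] mult.commute)
  also have "\<dots> \<le> ennreal (r0 powr s) * emeasure lborel (A - ?B)"
    using mAB fin by (intro mult_left_mono) (auto simp: emeasure_eq_ennreal_measure less_top)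
  also have "\<dots> = (\<integral>\<^sup>+\<xi>. ennreal (r0 powr s) * indicator (A - ?B) \<xi> \<partial>lborel)"
    using A by (intro nn_integral_cmult_indicator[symmetric]) auto
  also have "\<dots> \<le> (\<integral>\<^sup>+\<xi>. indicator A \<xi> * ennreal (norm \<xi> powr s) \<partial>lborel)"
  proof (rule nn_integral_mono)
    fix \<xi> :: 'a
    show "ennreal (r0 powr s) * indicator (A - ?B) \<xi> \<le> indicator A \<xi> * ennreal (norm \<xi> powr s)"
    proof (cases "\<xi> \<in> A - ?B")
      case True
      then have "r0 \<le> norm \<xi>" by simp
      then have "r0 powr s \<le> norm \<xi> powr s" using s r00 by (intro powr_mono2) auto
      then show ?thesis using True by (simp add: ennreal_leI)
    qed simp
  qed
  finally show ?thesis .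
qed

lemma main_borel:
  fixes E :: "'a::euclidean_space set" and \<eta> p t R :: real
  assumes E[measurable]: "E \<in> sets borel" and Efin: "emeasure lborel E < \<infinity>"
    and s: "0 < \<eta> * p" and p: "0 < p" and t: "0 < t" and R: "0 < R"
  defines "A' \<equiv> {\<xi>. t < cmod (FT (indicator E) \<xi>)} \<inter> ball 0 R"
  defines "m \<equiv> measure lborel A'" and "V \<equiv> measure lborel (ball (0::'a) 1)"
  shows "ennreal (t^2 * exp (-pi) * (2 * V / 4^DIM('a)) * (m / 2 * (m / (2*V)) powr (\<eta> * p / real DIM('a))))
     \<le> gagliardo_p \<eta> p E"
proof -
  define s where "s = \<eta> * p"
  have s0: "0 < s" using s by (simp add: s_def)
  define d where "d = real DIM('a)"
  define e where "e = 1 / R^2"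
  have e: "e > 0" using R by (simp add: e_def)
  define g where "g \<xi> = exp (-pi*e*norm \<xi>^2)" for \<xi> :: 'a
  define D where "D h x = (indicator E x - indicator E (h + x) :: real)" for h x :: 'a
  define nh where "nh h = norm h powr (d + s)" for h :: 'a
  define c1 where "c1 = 2 * V / 4^DIM('a)"
  have c10: "0 \<le> c1" by (simp add: c1_def V_def)
  have iE: "integrable lborel (indicator E :: 'a \<Rightarrow> real)"
    using Efin by (simp add: integrable_indicator_iff)
  have FTm[measurable]: "FT (indicator E :: 'a \<Rightarrow> real) \<in> borel_measurable lborel"
    by (rule FT_measurable) simp
  have A'm[measurable]: "A' \<in> sets borel" unfolding A'_def by measurable
  have A'fin: "emeasure lborel A' < \<infinity>"
  proof -
    have "emeasure lborel A' \<le> emeasure lborel (ball (0::'a) R)" unfolding A'_def by (intro emeasure_mono) auto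
    then show ?thesis using emeasure_lborel_ball_finite[of "0::'a" R] by (simp add: order_le_less_trans)
  qed
  have Dint: "integrable lborel (D h)" for h
    unfolding D_def using iE integrable_lborel_translate[OF iE, of h] by (intro Bochner_Integration.integrable_diff)
  have D1: "\<bar>D h x\<bar> \<le> 1" for h x unfolding D_def by (auto simp: indicator_def)
  have Dsq: "(D h x)^2 = \<bar>D h x\<bar>" for h x unfolding D_def by (auto simp: indicator_def)
  have pw: "ennreal (indicator A' \<xi> * (t^2 * exp (-pi)) * (cmod (1 - cis (2*pi*(h \<bullet> \<xi>))))^2)
      \<le> ennreal (g \<xi> * (cmod (FT (D h) \<xi>))^2)" for h \<xi>
  proof (cases "\<xi> \<in> A'")
    case True
    then have t1: "t < cmod (FT (indicator E) \<xi>)" and n: "norm \<xi> < R" by (auto simp: A'_def)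
    have "e * norm \<xi>^2 \<le> 1"
    proof -
      have "norm \<xi>^2 \<le> R^2" using n by (intro power_mono) auto
      then show ?thesis using R by (simp add: e_def field_simps)
    qed
    then have g1: "exp (-pi) \<le> g \<xi>" unfolding g_def using pi_gt_zero
      by (simp add: mult.assoc mult_le_cancel_left1)
    have t2: "t^2 \<le> (cmod (FT (indicator E) \<xi>))^2" using t t1 by (intro power_mono) auto
    have "t^2 * exp (-pi) \<le> (cmod (FT (indicator E) \<xi>))^2 * g \<xi>"
      using t2 g1 by (intro mult_mono) auto
    then have "t^2 * exp (-pi) * (cmod (1 - cis (2*pi*(h \<bullet> \<xi>))))^2
        \<le> (cmod (FT (indicator E) \<xi>))^2 * g \<xi> * (cmod (1 - cis (2*pi*(h \<bullet> \<xi>))))^2"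
      by (intro mult_right_mono) auto
    also have "\<dots> = g \<xi> * (cmod (FT (D h) \<xi>))^2"
      unfolding D_def FT_shift[OF E Efin] by (simp add: norm_mult power_mult_distrib)
    finally show ?thesis using True by (intro ennreal_leI) simp
  qed simp
  have step_h: "(\<integral>\<^sup>+\<xi>. ennreal (indicator A' \<xi> * (t^2 * exp (-pi)) * ((cmod (1 - cis (2*pi*(h \<bullet> \<xi>))))^2 / nh h)) \<partial>lborel)
      \<le> (\<integral>\<^sup>+x. ennreal (\<bar>D h x\<bar> / nh h) \<partial>lborel)" for h
  proof -
    have nh0: "0 \<le> nh h" by (simp add: nh_def)
    have "(\<integral>\<^sup>+\<xi>. ennreal (indicator A' \<xi> * (t^2 * exp (-pi)) * ((cmod (1 - cis (2*pi*(h \<bullet> \<xi>))))^2 / nh h)) \<partial>lborel)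
       = (\<integral>\<^sup>+\<xi>. ennreal (1 / nh h) * ennreal (indicator A' \<xi> * (t^2 * exp (-pi)) * (cmod (1 - cis (2*pi*(h \<bullet> \<xi>))))^2) \<partial>lborel)"
      using nh0 by (intro nn_integral_cong) (simp add: ennreal_mult'[symmetric] field_simps)
    also have "\<dots> = ennreal (1 / nh h) * (\<integral>\<^sup>+\<xi>. ennreal (indicator A' \<xi> * (t^2 * exp (-pi)) * (cmod (1 - cis (2*pi*(h \<bullet> \<xi>))))^2) \<partial>lborel)"
      by (rule nn_integral_cmult) measurable
    also have "\<dots> \<le> ennreal (1 / nh h) * (\<integral>\<^sup>+\<xi>. ennreal (g \<xi> * (cmod (FT (D h) \<xi>))^2) \<partial>lborel)"
      by (intro mult_left_mono nn_integral_mono pw) auto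
    also have "\<dots> \<le> ennreal (1 / nh h) * (\<integral>\<^sup>+x. ennreal ((D h x)^2) \<partial>lborel)"
      using bessel_gauss[OF Dint D1 e] unfolding g_def by (intro mult_left_mono) auto
    also have "\<dots> = (\<integral>\<^sup>+x. ennreal (1 / nh h) * ennreal ((D h x)^2) \<partial>lborel)"
      by (rule nn_integral_cmult[symmetric]) (simp add: D_def)
    also have "\<dots> = (\<integral>\<^sup>+x. ennreal (\<bar>D h x\<bar> / nh h) \<partial>lborel)"
      using nh0 by (intro nn_integral_cong) (simp add: Dsq ennreal_mult'[symmetric])
    finally show ?thesis .
  qed
  have G: "gagliardo_p \<eta> p E = (\<integral>\<^sup>+h. \<integral>\<^sup>+x. ennreal (\<bar>D h x\<bar> / nh h) \<partial>lborel \<partial>lborel)"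
    unfolding gag_borel[OF E p] D_def nh_def d_def s_def ..
  have "(\<integral>\<^sup>+\<xi>. \<integral>\<^sup>+h. ennreal (indicator A' \<xi> * (t^2 * exp (-pi)) * ((cmod (1 - cis (2*pi*(h \<bullet> \<xi>))))^2 / nh h)) \<partial>lborel \<partial>lborel)
     = (\<integral>\<^sup>+h. \<integral>\<^sup>+\<xi>. ennreal (indicator A' \<xi> * (t^2 * exp (-pi)) * ((cmod (1 - cis (2*pi*(h \<bullet> \<xi>))))^2 / nh h)) \<partial>lborel \<partial>lborel)"
    by (rule lborel_pair.Fubini') (unfold nh_def, measurable)
  also have "\<dots> \<le> gagliardo_p \<eta> p E"
    unfolding G by (intro nn_integral_mono step_h)
  finally have up: "(\<integral>\<^sup>+\<xi>. \<integral>\<^sup>+h. ennreal (indicator A' \<xi> * (t^2 * exp (-pi)) * ((cmod (1 - cis (2*pi*(h \<bullet> \<xi>))))^2 / nh h)) \<partial>lborel \<partial>lborel)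
      \<le> gagliardo_p \<eta> p E" .
  have "ennreal (t^2 * exp (-pi) * c1) * ennreal (m / 2 * (m / (2*V)) powr (\<eta> * p / real DIM('a)))
      \<le> ennreal (t^2 * exp (-pi) * c1) * (\<integral>\<^sup>+\<xi>. indicator A' \<xi> * ennreal (norm \<xi> powr s) \<partial>lborel)"
    unfolding m_def V_def s_def by (intro mult_left_mono rearr A'm A'fin s) auto
  also have "\<dots> = (\<integral>\<^sup>+\<xi>. ennreal (indicator A' \<xi> * (t^2 * exp (-pi))) * ennreal (c1 * norm \<xi> powr s) \<partial>lborel)"
    using c10 by (subst nn_integral_cmult[symmetric]) (auto intro!: nn_integral_cong simp: indicator_def ennreal_mult[symmetric] mult_ac)
  also have "\<dots> \<le> (\<integral>\<^sup>+\<xi>. ennreal (indicator A' \<xi> * (t^2 * exp (-pi))) * (\<integral>\<^sup>+h. ennreal ((cmod (1 - cis (2*pi*(h \<bullet> \<xi>))))^2 / nh h) \<partial>lborel) \<partial>lborel)"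
    unfolding c1_def V_def nh_def d_def by (intro nn_integral_mono mult_left_mono hint_lower s0) auto
  also have "\<dots> = (\<integral>\<^sup>+\<xi>. \<integral>\<^sup>+h. ennreal (indicator A' \<xi> * (t^2 * exp (-pi)) * ((cmod (1 - cis (2*pi*(h \<bullet> \<xi>))))^2 / nh h)) \<partial>lborel \<partial>lborel)"
  proof (rule nn_integral_cong)
    fix \<xi> :: 'a
    have "(\<integral>\<^sup>+h. ennreal (indicator A' \<xi> * (t^2 * exp (-pi)) * ((cmod (1 - cis (2*pi*(h \<bullet> \<xi>))))^2 / nh h)) \<partial>lborel)
      = (\<integral>\<^sup>+h. ennreal (indicator A' \<xi> * (t^2 * exp (-pi))) * ennreal ((cmod (1 - cis (2*pi*(h \<bullet> \<xi>))))^2 / nh h) \<partial>lborel)"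
      by (intro nn_integral_cong) (simp add: ennreal_mult'[symmetric] nh_def)
    also have "\<dots> = ennreal (indicator A' \<xi> * (t^2 * exp (-pi))) * (\<integral>\<^sup>+h. ennreal ((cmod (1 - cis (2*pi*(h \<bullet> \<xi>))))^2 / nh h) \<partial>lborel)"
      by (rule nn_integral_cmult) (unfold nh_def, measurable)
    finally show "ennreal (indicator A' \<xi> * (t^2 * exp (-pi))) * (\<integral>\<^sup>+h. ennreal ((cmod (1 - cis (2*pi*(h \<bullet> \<xi>))))^2 / nh h) \<partial>lborel)
      = (\<integral>\<^sup>+h. ennreal (indicator A' \<xi> * (t^2 * exp (-pi)) * ((cmod (1 - cis (2*pi*(h \<bullet> \<xi>))))^2 / nh h)) \<partial>lborel)" by simp
  qed
  also note up
  finally have X: "ennreal (t^2 * exp (-pi) * c1) * ennreal (m / 2 * (m / (2*V)) powr (\<eta> * p / real DIM('a)))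
      \<le> gagliardo_p \<eta> p E" .
  moreover have "ennreal (t^2 * exp (-pi) * c1) * ennreal (m / 2 * (m / (2*V)) powr (\<eta> * p / real DIM('a)))
     = ennreal (t^2 * exp (-pi) * (2 * V / 4^DIM('a)) * (m / 2 * (m / (2*V)) powr (\<eta> * p / real DIM('a))))"
    using c10 by (subst ennreal_mult'[symmetric]) (auto simp: c1_def V_def)
  ultimately show ?thesis by simp
qed

lemma level_bound_borel:
  fixes S :: "'a::euclidean_space set" and \<eta> p t K0 G :: real
  assumes S[measurable]: "S \<in> sets borel" and Sfin: "emeasure lborel S < \<infinity>"
    and s: "0 < \<eta> * p" and p: "0 < p" and t: "0 < t"
    and Gdef: "gagliardo_p \<eta> p S = ennreal G" and G0: "0 \<le> G"
  defines "d \<equiv> real DIM('a)" and "V \<equiv> measure lborel (ball (0::'a) 1)"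
  defines "K0 \<equiv> exp (-pi) * (2 * V / 4^DIM('a)) * (1/2) * (1/(2*V)) powr (\<eta> * p / d)"
  shows "emeasure lborel {\<xi>. t < cmod (FT (indicator S) \<xi>)} \<le> ennreal ((G / (t^2 * K0)) powr (d / (d + \<eta> * p)))"
proof -
  define s' where "s' = \<eta> * p"
  have d: "d > 0" by (simp add: d_def)
  have V: "V > 0" unfolding V_def by (rule content_ball_pos) simp
  have K0: "K0 > 0" unfolding K0_def using V by simp
  define A where "A = {\<xi>. t < cmod (FT (indicator S) \<xi>)}"
  have FTm[measurable]: "FT (indicator S :: 'a \<Rightarrow> real) \<in> borel_measurable lborel"
    by (rule FT_measurable) simp
  have Am[measurable]: "A \<in> sets borel" unfolding A_def by measurable
  define Mb where "Mb = (G / (t^2 * K0)) powr (d / (d + s'))"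
  have bR: "emeasure lborel (A \<inter> ball 0 R) \<le> ennreal Mb" if R: "R > 0" for R
  proof -
    define m where "m = measure lborel (A \<inter> ball 0 R)"
    have m0: "0 \<le> m" by (simp add: m_def)
    have fin: "emeasure lborel (A \<inter> ball 0 R) < \<infinity>"
      using emeasure_lborel_ball_finite[of "0::'a" R]
      by (rule le_less_trans[rotated]) (intro emeasure_mono, auto)
    have "ennreal (t^2 * exp (-pi) * (2 * V / 4^DIM('a)) * (m / 2 * (m / (2*V)) powr (\<eta> * p / real DIM('a))))
       \<le> gagliardo_p \<eta> p S"
      using main_borel[OF S Sfin s p t R] unfolding m_def V_def A_def by simp
    then have le1: "t^2 * exp (-pi) * (2 * V / 4^DIM('a)) * (m / 2 * (m / (2*V)) powr (s' / d)) \<le> G"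
      using G0 by (simp add: Gdef s'_def d_def)
    have eq: "m / 2 * (m / (2*V)) powr (s' / d) = (1/2) * (1/(2*V)) powr (s' / d) * m powr ((d + s') / d)"
    proof (cases "m = 0")
      case True then show ?thesis using d s by (simp add: s'_def)
    next
      case False
      then have mp: "m > 0" using m0 by simp
      have "m / (2*V) = m * (1/(2*V))" by simp
      then have "(m / (2*V)) powr (s' / d) = m powr (s'/d) * (1/(2*V)) powr (s' / d)"
        by (simp only: powr_mult)
      moreover have "m powr ((d + s') / d) = m * m powr (s'/d)"
        using mp d by (simp add: add_divide_distrib powr_add)
      ultimately show ?thesis by simp
    qed
    have "t^2 * exp (-pi) * (2 * V / 4^DIM('a)) * (m / 2 * (m / (2*V)) powr (s' / d)) = t^2 * K0 * m powr ((d + s') / d)"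
      unfolding eq by (simp add: K0_def s'_def mult_ac)
    then have "t^2 * K0 * m powr ((d + s') / d) \<le> G" using le1 by simp
    then have le2: "m powr ((d + s') / d) \<le> G / (t^2 * K0)"
      using t K0 by (simp add: field_simps)
    have "m = (m powr ((d + s') / d)) powr (d / (d + s'))"
      using d s m0 by (simp add: powr_powr s'_def)
    also have "\<dots> \<le> (G / (t^2 * K0)) powr (d / (d + s'))"
      using le2 d s by (intro powr_mono2) (auto simp: s'_def)
    finally have "m \<le> Mb" by (simp add: Mb_def)
    then show ?thesis using fin by (simp add: m_def emeasure_eq_ennreal_measure less_top ennreal_leI)
  qed
  have "emeasure lborel A = (SUP n. emeasure lborel (A \<inter> ball 0 (real (Suc n))))"
  proof -
    have "(\<Union>n. A \<inter> ball 0 (real (Suc n))) = A"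
    proof (intro equalityI subsetI)
      fix x assume "x \<in> A"
      obtain n where "norm x < real (Suc n)" using reals_Archimedean2[of "norm x"]
        by (metis less_Suc_eq of_nat_less_iff order.strict_trans)
      then show "x \<in> (\<Union>n. A \<inter> ball 0 (real (Suc n)))" using \<open>x \<in> A\<close> by auto
    qed auto
    moreover have "incseq (\<lambda>n. A \<inter> ball (0::'a) (real (Suc n)))"
      by (auto simp: incseq_def)
    ultimately show ?thesis
      by (subst SUP_emeasure_incseq) auto
  qed
  also have "\<dots> \<le> ennreal Mb"
    by (intro SUP_least bR) auto
  finally show ?thesis by (simp add: A_def Mb_def s'_def)
qed

theorem corollary1p5:
  fixes \<eta> p :: real
  assumes "0 < \<eta>" "\<eta> < 1" "1 \<le> p" "\<eta> * p < 1"
  shows "\<exists>C::real. \<forall>E::('a::euclidean_space) set. char_in_W \<eta> p E \<longrightarrow>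
           weak_Lr_norm (2 * real DIM('a) / (real DIM('a) + \<eta> * p)) (fourier_transform (char_fun E))
             \<le> ennreal (C * enn2real (gagliardo_p \<eta> p E) powr (1/2))"
proof -
  have p: "0 < p" using assms by simp
  have s: "0 < \<eta> * p" using assms by simp
  define d where "d = real DIM('a)"
  have d: "d > 0" by (simp add: d_def)
  define V where "V = measure lborel (ball (0::'a) 1)"
  have V: "V > 0" unfolding V_def by (rule content_ball_pos) simp
  define K0 where "K0 = exp (-pi) * (2 * V / 4^DIM('a)) * (1/2) * (1/(2*V)) powr (\<eta> * p / d)"
  have K0: "K0 > 0" unfolding K0_def using V by simp
  show ?thesis
  proof (intro exI allI impI)
    fix E :: "'a set"
    assume W: "char_in_W \<eta> p E"
    then have Eleb: "E \<in> sets lebesgue" and Efin: "emeasure lebesgue E < \<infinity>"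
      and Gfin: "gagliardo_p \<eta> p E < \<infinity>" by (auto simp: char_in_W_def)
    obtain S N N' where ES: "E = S \<union> N" and NN': "N \<subseteq> N'" and N'null: "N' \<in> null_sets lborel"
      and Sb: "S \<in> sets lborel" using sets_completionE[OF Eleb] by blast
    have S[measurable]: "S \<in> sets borel" using Sb by simp
    have AEl: "AE x in lborel. x \<notin> N'" using N'null by (rule AE_not_in)
    have eqi: "x \<notin> N' \<Longrightarrow> x \<in> E \<longleftrightarrow> x \<in> S" for x using ES NN' by auto
    have AEleb: "AE x in lebesgue. x \<notin> N'" using AEl by (rule AE_completion)
    have Em[measurable]: "E \<in> sets lebesgue" by (rule Eleb)
    have FE: "fourier_transform (char_fun E) = FT (indicator S)"
    proof
      fix \<xi> :: 'a
      have m1[measurable]: "(\<lambda>x. cis (- 2 * pi * (x \<bullet> \<xi>))) \<in> borel_measurable lebesgue"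
        by (rule measurable_completion) measurable
      have SL[measurable]: "S \<in> sets lebesgue" using Sb by simp
      have cf: "char_fun X = (\<lambda>x. complex_of_real (indicator X x))" for X :: "'a set"
        by (auto simp: fun_eq_iff char_fun_def)
      have "fourier_transform (char_fun E) \<xi> = fourier_transform (char_fun S) \<xi>"
        unfolding fourier_transform_def
      proof (rule integral_cong_AE)
        show "(\<lambda>x. cis (- 2 * pi * (x \<bullet> \<xi>)) * char_fun E x) \<in> borel_measurable lebesgue"
          unfolding cf by measurable
        show "(\<lambda>x. cis (- 2 * pi * (x \<bullet> \<xi>)) * char_fun S x) \<in> borel_measurable lebesgue"
          unfolding cf by measurable
        show "AE x in lebesgue. cis (- 2 * pi * (x \<bullet> \<xi>)) * char_fun E x = cis (- 2 * pi * (x \<bullet> \<xi>)) * char_fun S x"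
          using AEleb by eventually_elim (simp add: char_fun_def eqi)
      qed
      also have "\<dots> = FT (indicator S) \<xi>" by (rule fourier_borel[OF S])
      finally show "fourier_transform (char_fun E) \<xi> = FT (indicator S) \<xi>" .
    qed
    have GE: "gagliardo_p \<eta> p E = gagliardo_p \<eta> p S"
      unfolding gagliardo_p_def
    proof (rule nn_integral_cong_AE)
      show "AE x in lebesgue. (\<integral>\<^sup>+ y. ennreal (norm (char_fun E x - char_fun E y) powr p / norm (x - y) powr (real DIM('a) + \<eta> * p)) \<partial>lebesgue)
          = (\<integral>\<^sup>+ y. ennreal (norm (char_fun S x - char_fun S y) powr p / norm (x - y) powr (real DIM('a) + \<eta> * p)) \<partial>lebesgue)"
        using AEleb
      proof eventually_elim
        case (elim x)
        show ?case
          by (rule nn_integral_cong_AE) (use AEleb in \<open>eventually_elim, simp add: char_fun_def eqi elim\<close>)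
      qed
    qed
    have Sfin: "emeasure lborel S < \<infinity>"
    proof -
      have "emeasure lebesgue S \<le> emeasure lebesgue E" using ES Eleb by (intro emeasure_mono) auto
      then show ?thesis using Efin emeasure_lebesgue_borel[OF S] by simp
    qed
    define G where "G = enn2real (gagliardo_p \<eta> p S)"
    have Gdef: "gagliardo_p \<eta> p S = ennreal G" using Gfin GE by (simp add: G_def less_top)
    have G0: "0 \<le> G" by (simp add: G_def)
    show "weak_Lr_norm (2 * real DIM('a) / (real DIM('a) + \<eta> * p)) (fourier_transform (char_fun E))
             \<le> ennreal (1 / sqrt K0 * enn2real (gagliardo_p \<eta> p E) powr (1/2))"
      unfolding weak_Lr_norm_def FE GE G_def[symmetric]
    proof (rule SUP_least)
      fix t :: real assume "t \<in> {0<..}"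
      then have t: "0 < t" by simp
      define A where "A = {\<xi>. t < cmod (FT (indicator S) \<xi>)}"
      have FTm[measurable]: "FT (indicator S :: 'a \<Rightarrow> real) \<in> borel_measurable lborel"
        by (rule FT_measurable) simp
      have Am: "A \<in> sets borel" unfolding A_def by measurable
      define Mb where "Mb = (G / (t^2 * K0)) powr (d / (d + \<eta> * p))"
      have lb: "emeasure lborel A \<le> ennreal Mb"
        using level_bound_borel[OF S Sfin s p t Gdef G0] unfolding A_def Mb_def K0_def d_def V_def .
      have Afin: "emeasure lborel A < \<infinity>" using lb by (rule le_less_trans) simp
      have Mb0: "0 \<le> Mb" by (simp add: Mb_def)
      have eA: "emeasure lebesgue {x. t < cmod (FT (indicator S) x)} = ennreal (measure lborel A)"
      proof -
        have "emeasure lebesgue {x. t < cmod (FT (indicator S) x)} = emeasure lborel A"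
          using emeasure_lebesgue_borel[OF Am] by (simp add: A_def)
        also have "\<dots> = ennreal (measure lborel A)" using Afin by (intro emeasure_eq_ennreal_measure) simp
        finally show ?thesis .
      qed
      have mA: "measure lborel A \<le> Mb"
        using lb Afin Mb0 by (simp add: emeasure_eq_ennreal_measure)
      have r: "1 / (2 * real DIM('a) / (real DIM('a) + \<eta> * p)) = (d + \<eta> * p) / (2 * d)"
        by (simp add: d_def)
      have "t * measure lborel A powr ((d + \<eta> * p) / (2 * d)) \<le> t * Mb powr ((d + \<eta> * p) / (2 * d))"
        using mA t d s by (intro mult_left_mono powr_mono2) auto
      also have "Mb powr ((d + \<eta> * p) / (2 * d)) = (G / (t^2 * K0)) powr (1/2)"
        using d s by (simp add: Mb_def powr_powr)
      also have "\<dots> = sqrt G / (t * sqrt K0)"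
        using G0 t K0 by (simp add: powr_half_sqrt real_sqrt_divide real_sqrt_mult)
      also have "t * (sqrt G / (t * sqrt K0)) = 1 / sqrt K0 * G powr (1/2)"
        using t G0 by (simp add: powr_half_sqrt)
      finally have fin: "t * measure lborel A powr ((d + \<eta> * p) / (2 * d)) \<le> 1 / sqrt K0 * G powr (1/2)" .
      show "ennreal t * ennreal_powr (emeasure lebesgue {x. t < cmod (FT (indicator S) x)})
              (1 / (2 * real DIM('a) / (real DIM('a) + \<eta> * p))) \<le> ennreal (1 / sqrt K0 * G powr (1/2))"
        unfolding eA r ennreal_powr_def using t fin by (simp add: ennreal_mult'[symmetric] ennreal_leI)
    qed
  qed
qed


end
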